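(* Let $V=\{0,1\}^n$ with uniform measure $\mu$. For any partition $(A,B,W)$ of $V$ there is another partition $(A',B',W')$ of $V$ such that: (1) $\mu(A')=\mu(A)$, $\mu(B')=\mu(B)$, $\mu(W')=\mu(W)$; (2) $A'$ is increasing and $B'$ is decreasing; (3) $|\nabla_i(A,B)|\ge|\nabla_i(A',B')|$ for all $i\in[n]$.
   Context: $V$ carries the coordinatewise product order. $A\subseteq V$ is increasing if $x\in A$ and $y\ge x$ imply $y\in A$; decreasing is defined analogously with $y\le x$. For $x\in V$, $x^i$ is $x$ with coordinate $i$ flipped, and $\nabla_i(A,B)=\{(x,x^i): x\in A,\ x^i\in B\}$. *)

theory Defs
  imports Complex_Main
begin

text \<open>The discrete cube V = {0,1}^n: points are maps nat => bool, coordinates 0..n-1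
  (coordinate i corresponds to index i+1 of [n]); all coordinates >= n are False.\<close>
definition cube :: "nat \<Rightarrow> (nat \<Rightarrow> bool) set" where
  "cube n = {x. \<forall>i\<ge>n. \<not> x i}"

definition mu :: "nat \<Rightarrow> (nat \<Rightarrow> bool) set \<Rightarrow> real" where
  "mu n A = real (card (A \<inter> cube n)) / 2 ^ n"

definition cube_le :: "nat \<Rightarrow> (nat \<Rightarrow> bool) \<Rightarrow> (nat \<Rightarrow> bool) \<Rightarrow> bool" where
  "cube_le n x y \<longleftrightarrow> (\<forall>i<n. x i \<longrightarrow> y i)"

definition increasing :: "nat \<Rightarrow> (nat \<Rightarrow> bool) set \<Rightarrow> bool" where
  "increasing n A \<longleftrightarrow> (\<forall>x\<in>A. \<forall>y\<in>cube n. cube_le n x y \<longrightarrow> y \<in> A)"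

definition decreasing :: "nat \<Rightarrow> (nat \<Rightarrow> bool) set \<Rightarrow> bool" where
  "decreasing n A \<longleftrightarrow> (\<forall>x\<in>A. \<forall>y\<in>cube n. cube_le n y x \<longrightarrow> y \<in> A)"

definition flip :: "nat \<Rightarrow> (nat \<Rightarrow> bool) \<Rightarrow> (nat \<Rightarrow> bool)" where
  "flip i x = x(i := \<not> x i)"

definition edge_boundary :: "nat \<Rightarrow> (nat \<Rightarrow> bool) set \<Rightarrow> (nat \<Rightarrow> bool) set
    \<Rightarrow> ((nat \<Rightarrow> bool) \<times> (nat \<Rightarrow> bool)) set" where
  "edge_boundary i A B = {(x, flip i x) | x. x \<in> A \<and> flip i x \<in> B}"

definition is_partition3 :: "nat \<Rightarrow> (nat \<Rightarrow> bool) set \<Rightarrow> (nat \<Rightarrow> bool) set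
    \<Rightarrow> (nat \<Rightarrow> bool) set \<Rightarrow> bool" where
  "is_partition3 n A B W \<longleftrightarrow> A \<union> B \<union> W = cube n \<and> A \<inter> B = {} \<and> A \<inter> W = {} \<and> B \<inter> W = {}"

end

theory Submission
  imports Defs
begin

lemma flip_flip[simp]: "flip i (flip i x) = x"
  by (auto simp: flip_def fun_eq_iff)
lemma flip_same[simp]: "flip i x i = (\<not> x i)"
  by (simp add: flip_def)
lemma flip_other: "k \<noteq> i \<Longrightarrow> flip i x k = x k"
  by (simp add: flip_def)
lemma flip_comm: "flip i (flip j x) = flip j (flip i x)"
  by (auto simp: flip_def fun_eq_iff)
lemma flip_cube: "i < n \<Longrightarrow> (flip i x \<in> cube n) = (x \<in> cube n)"
  by (auto simp: cube_def flip_def)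
lemma neq_at: "x k \<noteq> y k \<Longrightarrow> x \<noteq> y" by auto

lemma finite_cube: "finite (cube n)"
proof -
  have "cube n \<subseteq> (\<lambda>S i. i \<in> S) ` Pow {..<n}"
  proof
    fix x assume "x \<in> cube n"
    hence "{i. x i} \<in> Pow {..<n}" by (auto simp: cube_def not_le[symmetric])
    moreover have "x = (\<lambda>i. i \<in> {i. x i})" by auto
    ultimately show "x \<in> (\<lambda>S i. i \<in> S) ` Pow {..<n}" by blast
  qed
  thus ?thesis by (rule finite_subset) auto
qed

definition C :: "nat \<Rightarrow> ((nat\<Rightarrow>bool)\<Rightarrow>nat) \<Rightarrow> (nat\<Rightarrow>bool) \<Rightarrow> nat" where
  "C i f x = (if x i then max (f x) (f (flip i x)) else min (f x) (f (flip i x)))"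

definition sig :: "nat \<Rightarrow> ((nat\<Rightarrow>bool)\<Rightarrow>nat) \<Rightarrow> (nat\<Rightarrow>bool) \<Rightarrow> (nat\<Rightarrow>bool)" where
  "sig i f x = (if (if x i then f (flip i x) > f x else f x > f (flip i x)) then flip i x else x)"

lemma C_sig: "C i f x = f (sig i f x)"
  by (auto simp: C_def sig_def)

lemma sig_flip: "sig i f (flip i x) = flip i (sig i f x)"
  by (auto simp: sig_def)

lemma sig_sig[simp]: "sig i f (sig i f x) = x"
  by (auto simp: sig_def)

lemma sig_cube: "i < n \<Longrightarrow> (sig i f x \<in> cube n) = (x \<in> cube n)"
  by (auto simp: sig_def flip_cube)

lemma inj_sig: "inj_on (sig i f) S"
  by (metis inj_onI sig_sig)

lemma card_C: assumes "i < n"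
  shows "card {x\<in>cube n. C i f x = k} = card {x\<in>cube n. f x = k}"
proof -
  have "{x\<in>cube n. C i f x = k} = sig i f ` {x\<in>cube n. f x = k}"
    using assms by (auto simp: C_sig sig_cube image_iff intro!: exI[where x="sig i f _"])
  thus ?thesis by (simp add: card_image inj_sig)
qed

definition bd :: "nat \<Rightarrow> nat \<Rightarrow> ((nat\<Rightarrow>bool)\<Rightarrow>nat) \<Rightarrow> nat" where
  "bd n j f = card {x\<in>cube n. f x = 2 \<and> f (flip j x) = 0}"

lemma bd_same: assumes "i < n" shows "bd n i (C i f) = bd n i f"
proof -
  have "{x\<in>cube n. C i f x = 2 \<and> C i f (flip i x) = 0}
     = sig i f ` {x\<in>cube n. f x = 2 \<and> f (flip i x) = 0}"
    using assms by (auto simp: C_sig sig_cube sig_flip image_iff intro!: exI[where x="sig i f _"])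
  thus ?thesis unfolding bd_def by (simp add: card_image inj_sig)
qed

lemma sum_squares:
  fixes \<phi> :: "(nat\<Rightarrow>bool) \<Rightarrow> nat"
  assumes "i \<noteq> j" "i < n" "j < n"
  shows "(\<Sum>x\<in>cube n. \<phi> x) = (\<Sum>b\<in>{b\<in>cube n. \<not> b i \<and> \<not> b j}.
            \<phi> b + \<phi> (flip i b) + \<phi> (flip j b) + \<phi> (flip i (flip j b)))"
proof -
  let ?T = "{b\<in>cube n. \<not> b i \<and> \<not> b j}"
  let ?base = "\<lambda>x::nat\<Rightarrow>bool. (x(i:=False))(j:=False)"
  have img: "?base ` cube n \<subseteq> ?T" using assms by (auto simp: cube_def)
  have "(\<Sum>x\<in>cube n. \<phi> x) = (\<Sum>b\<in>?T. sum \<phi> {x\<in>cube n. ?base x = b})"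
    using sum.group[OF finite_cube _ img, of \<phi>] by (simp add: finite_cube)
  also have "\<dots> = (\<Sum>b\<in>?T. \<phi> b + \<phi> (flip i b) + \<phi> (flip j b) + \<phi> (flip i (flip j b)))"
  proof (rule sum.cong[OF refl])
    fix b assume b: "b \<in> ?T"
    have bi: "\<not> b i" "\<not> b j" and bc: "b \<in> cube n" using b by auto
    have agr: "x = y" if "\<And>t. t \<noteq> i \<Longrightarrow> t \<noteq> j \<Longrightarrow> x t = b t" "x i = y i" "x j = y j"
       "\<And>t. t \<noteq> i \<Longrightarrow> t \<noteq> j \<Longrightarrow> y t = b t" for x y :: "nat \<Rightarrow> bool"
    proof (rule ext)
      fix t show "x t = y t" using that by (cases "t = i"; cases "t = j") auto
    qed
    have bb: "?base y = b" if "\<And>t. t \<noteq> i \<Longrightarrow> t \<noteq> j \<Longrightarrow> y t = b t" for y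
      using that bi by (intro ext) auto
    have eq: "{x\<in>cube n. ?base x = b} = {b, flip i b, flip j b, flip i (flip j b)}"
    proof
      show "{x\<in>cube n. ?base x = b} \<subseteq> {b, flip i b, flip j b, flip i (flip j b)}"
      proof
        fix x assume x: "x \<in> {x\<in>cube n. ?base x = b}"
        have ag: "x t = b t" if "t \<noteq> i" "t \<noteq> j" for t
        proof -
          have "?base x t = b t" using x by simp
          thus ?thesis using that by simp
        qed
        have o1: "flip i b t = b t" "flip j b t = b t" "flip i (flip j b) t = b t"
          if "t \<noteq> i" "t \<noteq> j" for t using that by (simp_all add: flip_other)
        have v: "flip i b i" "\<not> flip i b j" "\<not> flip j b i" "flip j b j"
           "flip i (flip j b) i" "flip i (flip j b) j"
          using bi assms(1) by (simp_all add: flip_other)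
        show "x \<in> {b, flip i b, flip j b, flip i (flip j b)}"
        proof (cases "x i"; cases "x j")
          assume "x i" "x j" hence "x = flip i (flip j b)" using v by (intro agr[OF ag _ _ o1(3)]) auto
          thus ?thesis by simp
        next
          assume "x i" "\<not> x j" hence "x = flip i b" using v by (intro agr[OF ag _ _ o1(1)]) auto
          thus ?thesis by simp
        next
          assume "\<not> x i" "x j" hence "x = flip j b" using v by (intro agr[OF ag _ _ o1(2)]) auto
          thus ?thesis by simp
        next
          assume "\<not> x i" "\<not> x j" hence "x = b" using bi by (intro agr[OF ag]) auto
          thus ?thesis by simp
        qed
      qed
    next
      have o1: "flip i b t = b t" "flip j b t = b t" "flip i (flip j b) t = b t"
          if "t \<noteq> i" "t \<noteq> j" for t using that by (simp_all add: flip_other)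
      show "{b, flip i b, flip j b, flip i (flip j b)} \<subseteq> {x\<in>cube n. ?base x = b}"
        using bb[OF o1(1)] bb[OF o1(2)] bb[OF o1(3)] bb[of b] bc assms by (simp add: flip_cube)
    qed
    have d1: "b \<noteq> flip i b" "b \<noteq> flip j b" "b \<noteq> flip i (flip j b)"
         "flip i b \<noteq> flip j b" "flip i b \<noteq> flip i (flip j b)" "flip j b \<noteq> flip i (flip j b)"
      using assms(1) bi
      by (rule_tac neq_at[where k=i], simp add: flip_other; fail
         | rule_tac neq_at[where k=j], simp add: flip_other; fail)+
    show "sum \<phi> {x\<in>cube n. ?base x = b} = \<phi> b + \<phi> (flip i b) + \<phi> (flip j b) + \<phi> (flip i (flip j b))"
      unfolding eq using d1 by (simp add: add.assoc)
  qed
  finally show ?thesis .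
qed

definition PP :: "nat \<Rightarrow> nat \<Rightarrow> nat" where
  "PP u v = (if u = 2 \<and> v = 0 then 1 else 0)"

lemma arith81:
  fixes a b c d :: nat
  assumes "a \<le> 2" "b \<le> 2" "c \<le> 2" "d \<le> 2"
  shows "PP (min a b) (min c d) + PP (max a b) (max c d) + PP (min c d) (min a b) + PP (max c d) (max a b)
        \<le> PP a c + PP b d + PP c a + PP d b"
proof -
  have all: "\<forall>a\<in>{0,1,2::nat}. \<forall>b\<in>{0,1,2::nat}. \<forall>c\<in>{0,1,2::nat}. \<forall>d\<in>{0,1,2::nat}. PP (min a b) (min c d) + PP (max a b) (max c d) + PP (min c d) (min a b) + PP (max c d) (max a b)
        \<le> PP a c + PP b d + PP c a + PP d b"
    by (simp add: PP_def)
  have "a \<in> {0,1,2}" "b \<in> {0,1,2}" "c \<in> {0,1,2}" "d \<in> {0,1,2}" using assms by auto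
  thus ?thesis using all by blast
qed

lemma card_sum: "card {x\<in>cube n. Q x} = (\<Sum>x\<in>cube n. if Q x then 1 else 0)"
  unfolding card_eq_sum by (rule sum.inter_filter[OF finite_cube])

lemma bd_other:
  assumes "i \<noteq> j" "i < n" "j < n" "\<forall>x. f x \<le> 2"
  shows "bd n j (C i f) \<le> bd n j f"
proof -
  let ?T = "{b\<in>cube n. \<not> b i \<and> \<not> b j}"
  have e: "\<And>h. bd n j h = (\<Sum>b\<in>?T. PP (h b) (h (flip j b)) + PP (h (flip i b)) (h (flip j (flip i b)))
      + PP (h (flip j b)) (h (flip j (flip j b))) + PP (h (flip i (flip j b))) (h (flip j (flip i (flip j b)))))"
    unfolding bd_def card_sum PP_def[symmetric] by (rule sum_squares[OF assms(1-3)])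
  show ?thesis unfolding e
  proof (rule sum_mono)
    fix b assume b: "b \<in> ?T"
    let ?b1 = "flip i b" and ?b2 = "flip j b" and ?b3 = "flip i (flip j b)"
    have f: "flip j ?b1 = ?b3" "flip i ?b3 = ?b2" "flip j ?b3 = ?b1"
      "flip i ?b1 = b" "flip j ?b2 = b" by (simp_all add: flip_comm)
    have v: "\<not> b i" "?b1 i" "\<not> ?b2 i" "?b3 i" using b assms(1) by (auto simp: flip_other)
    have c: "C i f b = min (f b) (f ?b1)" "C i f ?b1 = max (f b) (f ?b1)"
      "C i f ?b2 = min (f ?b2) (f ?b3)" "C i f ?b3 = max (f ?b2) (f ?b3)"
      using v f by (simp_all add: C_def max.commute min.commute)
    show "PP (C i f b) (C i f (flip j b)) + PP (C i f ?b1) (C i f (flip j ?b1)) +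
          PP (C i f ?b2) (C i f (flip j ?b2)) + PP (C i f ?b3) (C i f (flip j ?b3))
        \<le> PP (f b) (f (flip j b)) + PP (f ?b1) (f (flip j ?b1)) +
          PP (f ?b2) (f (flip j ?b2)) + PP (f ?b3) (f (flip j ?b3))"
      unfolding f c
      by (rule arith81) (use assms(4) in auto)
  qed
qed

definition comp :: "nat \<Rightarrow> ((nat\<Rightarrow>bool)\<Rightarrow>nat) \<Rightarrow> bool" where
  "comp i f \<longleftrightarrow> (\<forall>x. \<not> x i \<longrightarrow> f x \<le> f (flip i x))"

lemma comp_C: "comp i (C i f)"
  unfolding comp_def C_def by auto

lemma comp_pres: assumes "comp k f" "k \<noteq> i" shows "comp k (C i f)"
  unfolding comp_def
proof (intro allI impI)
  fix x assume x: "\<not> x k"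
  have a: "f x \<le> f (flip k x)" using assms x by (auto simp: comp_def)
  have b: "f (flip i x) \<le> f (flip k (flip i x))" using assms x by (auto simp: comp_def flip_other)
  have i: "flip k x i = x i" using assms by (simp add: flip_other)
  show "C i f x \<le> C i f (flip k x)"
    unfolding C_def i using a b by (auto simp: flip_comm)
qed

lemma comp_mono:
  assumes "\<forall>k<n. comp k F" "x \<in> cube n" "y \<in> cube n" "cube_le n x y"
  shows "F x \<le> F y"
proof -
  define z where "z k = (\<lambda>t. if t < k then y t else x t)" for k
  have "F x \<le> F (z k)" for k
  proof (induction k)
    case 0 thus ?case by (simp add: z_def)
  next
    case (Suc k)
    show ?case
    proof (cases "x k = y k")
      case True
      hence "z (Suc k) = z k" by (auto simp: z_def fun_eq_iff less_Suc_eq)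
      thus ?thesis using Suc by simp
    next
      case False
      hence kn: "k < n" using assms(2,3) by (auto simp: cube_def not_less[symmetric])
      hence xy: "\<not> x k" "y k" using False assms(4) by (auto simp: cube_le_def)
      have "z (Suc k) = flip k (z k)" using xy by (auto simp: z_def fun_eq_iff flip_def)
      moreover have "\<not> z k k" using xy by (simp add: z_def)
      ultimately have "F (z k) \<le> F (z (Suc k))" using assms(1) kn by (auto simp: comp_def)
      thus ?thesis using Suc by simp
    qed
  qed
  moreover have "z n = y" using assms(2,3) by (auto simp: z_def fun_eq_iff cube_def)
  ultimately show ?thesis by metis
qed

primrec iter :: "((nat\<Rightarrow>bool)\<Rightarrow>nat) \<Rightarrow> nat \<Rightarrow> (nat\<Rightarrow>bool) \<Rightarrow> nat" where
  "iter f 0 = f"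
| "iter f (Suc k) = C k (iter f k)"

lemma iter_props:
  assumes "\<forall>x. f x \<le> 2"
  shows "k \<le> n \<Longrightarrow> (\<forall>x. iter f k x \<le> 2) \<and> (\<forall>t. card {x\<in>cube n. iter f k x = t} = card {x\<in>cube n. f x = t})
     \<and> (\<forall>j<n. bd n j (iter f k) \<le> bd n j f) \<and> (\<forall>i<k. comp i (iter f k))"
proof (induction k)
  case 0 thus ?case using assms by simp
next
  case (Suc k)
  hence IH: "(\<forall>x. iter f k x \<le> 2)" "(\<forall>t. card {x\<in>cube n. iter f k x = t} = card {x\<in>cube n. f x = t})"
     "(\<forall>j<n. bd n j (iter f k) \<le> bd n j f)" "(\<forall>i<k. comp i (iter f k))" and kn: "k < n" by auto
  have 1: "\<forall>x. iter f (Suc k) x \<le> 2" using IH(1) by (simp add: C_def min_le_iff_disj)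
  have 2: "\<forall>t. card {x\<in>cube n. iter f (Suc k) x = t} = card {x\<in>cube n. f x = t}"
    using IH(2) card_C[OF kn] by simp
  have 3: "\<forall>j<n. bd n j (iter f (Suc k)) \<le> bd n j f"
  proof (intro allI impI)
    fix j assume j: "j < n"
    have "bd n j (C k (iter f k)) \<le> bd n j (iter f k)"
      using bd_same[OF kn] bd_other[of k j n "iter f k"] kn j IH(1) by (cases "j = k") auto
    thus "bd n j (iter f (Suc k)) \<le> bd n j f" using IH(3) j by fastforce
  qed
  have 4: "\<forall>i<Suc k. comp i (iter f (Suc k))"
    using IH(4) comp_C comp_pres by (auto simp: less_Suc_eq)
  show ?case using 1 2 3 4 by blast
qed

lemma eb_card: assumes "j < n"
  shows "card (edge_boundary j {x\<in>cube n. g x = 2} {x\<in>cube n. g x = 0}) = bd n j g"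
proof -
  have "edge_boundary j {x\<in>cube n. g x = 2} {x\<in>cube n. g x = 0}
      = (\<lambda>x. (x, flip j x)) ` {x\<in>cube n. g x = 2 \<and> g (flip j x) = 0}"
    using assms by (auto simp: edge_boundary_def flip_cube)
  moreover have "inj_on (\<lambda>x. (x, flip j x)) S" for S by (auto intro: inj_onI)
  ultimately show ?thesis by (simp add: card_image bd_def)
qed

theorem proposition3p4:
  fixes n :: nat and A B W :: "(nat \<Rightarrow> bool) set"
  assumes "is_partition3 n A B W"
  shows "\<exists>A' B' W'. is_partition3 n A' B' W'
           \<and> mu n A' = mu n A \<and> mu n B' = mu n B \<and> mu n W' = mu n W
           \<and> increasing n A' \<and> decreasing n B'
           \<and> (\<forall>i<n. card (edge_boundary i A B) \<ge> card (edge_boundary i A' B'))"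
proof -
  define f :: "(nat\<Rightarrow>bool)\<Rightarrow>nat" where "f x = (if x \<in> A then 2 else if x \<in> B then 0 else 1)" for x
  have f2: "\<forall>x. f x \<le> 2" by (simp add: f_def)
  have eA: "A = {x\<in>cube n. f x = 2}" and eB: "B = {x\<in>cube n. f x = 0}"
    and eW: "W = {x\<in>cube n. f x = 1}"
    using assms by (auto simp: is_partition3_def f_def)
  define F where "F = iter f n"
  from iter_props[OF f2, of n n] have
    P: "(\<forall>x. F x \<le> 2)" "(\<forall>t. card {x\<in>cube n. F x = t} = card {x\<in>cube n. f x = t})"
     "(\<forall>j<n. bd n j F \<le> bd n j f)" "(\<forall>i<n. comp i F)" by (auto simp: F_def)
  have mueq: "mu n {x\<in>cube n. F x = t} = mu n {x\<in>cube n. f x = t}" for t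
    using P(2) by (simp add: mu_def Int_absorb2)
  have part: "is_partition3 n {x\<in>cube n. F x = 2} {x\<in>cube n. F x = 0} {x\<in>cube n. F x = 1}"
  proof -
    have "F x = 0 \<or> F x = 1 \<or> F x = 2" for x using P(1)[rule_format, of x] by linarith
    hence r: "x \<in> cube n \<Longrightarrow> x \<in> {x\<in>cube n. F x = 2} \<union> {x\<in>cube n. F x = 0} \<union> {x\<in>cube n. F x = 1}" for x
      by blast
    show ?thesis unfolding is_partition3_def
      by (intro conjI equalityI subsetI) (auto dest: r)
  qed
  have inc: "increasing n {x\<in>cube n. F x = 2}"
    unfolding increasing_def
  proof (intro ballI impI)
    fix x y assume x: "x \<in> {x\<in>cube n. F x = 2}" and y: "y \<in> cube n" and le: "cube_le n x y"
    have "F x \<le> F y" using comp_mono[OF P(4) _ y le] x by simp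
    thus "y \<in> {x\<in>cube n. F x = 2}" using x y P(1)[rule_format, of y] by simp
  qed
  have dec: "decreasing n {x\<in>cube n. F x = 0}"
    unfolding decreasing_def
  proof (intro ballI impI)
    fix x y assume x: "x \<in> {x\<in>cube n. F x = 0}" and y: "y \<in> cube n" and le: "cube_le n y x"
    have "F y \<le> F x" using comp_mono[OF P(4) y _ le] x by simp
    thus "y \<in> {x\<in>cube n. F x = 0}" using x y by simp
  qed
  have bd: "\<forall>i<n. card (edge_boundary i A B) \<ge> card (edge_boundary i {x\<in>cube n. F x = 2} {x\<in>cube n. F x = 0})"
    using P(3) eb_card unfolding eA eB by simp
  show ?thesis
    apply (rule exI[of _ "{x\<in>cube n. F x = 2}"], rule exI[of _ "{x\<in>cube n. F x = 0}"],
           rule exI[of _ "{x\<in>cube n. F x = 1}"])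
    using part inc dec bd mueq unfolding eA eB eW by simp
qed

end
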